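(* Let $f(x)=\frac1n\sum_{i=1}^nf_i(x)$ on $\mathbb{R}^d$ where each $f_i$ is lower bounded and $L_i$-smooth, and let $(c_k)_{k\ge0}$ be any non-decreasing positive sequence of real numbers. Under the DecSPS stepsize (defined in the context), for every $k\in\mathbb{N}$, $$\min\left\{\frac1{2c_kL_{\max}},\frac{c_0\gamma_b}{c_k}\right\}\le\gamma_k\le\frac{c_0\gamma_b}{c_k},$$ where $L_{\max}=\max_iL_i$, and moreover $\gamma_k\le\gamma_{k-1}$.
   Context: For $\mathcal S\subseteq[n]$, $f_{\mathcal S}:=\frac1{|\mathcal S|}\sum_{i\in\mathcal S}f_i$, $f^*_{\mathcal S}:=\inf_xf_{\mathcal S}(x)$, and $\ell^*_{\mathcal S}$ is a given real number with $\ell^*_{\mathcal S}\le f^*_{\mathcal S}$. Given any sequence of minibatches $\mathcal S_k\subseteq[n]$ and points $x^k$ (the SGD iterates $x^{k+1}=x^k-\gamma_k\nabla f_{\mathcal S_k}(x^k)$) with $\nabla f_{\mathcal S_k}(x^k)\ne0$, the DecSPS stepsize is $\gamma_k:=\frac1{c_k}\min\left\{\frac{f_{\mathcal S_k}(x^k)-\ell^*_{\mathcal S_k}}{\|\nabla f_{\mathcal S_k}(x^k)\|^2},\ c_{k-1}\gamma_{k-1}\right\}$ for $k\ge0$, with $c_{-1}=c_0$ and $\gamma_{-1}=\gamma_b>0$ a fixed constant. *)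

theory Defs
  imports "HOL-Analysis.Analysis"
begin

definition fS :: "(nat \<Rightarrow> 'a \<Rightarrow> real) \<Rightarrow> nat set \<Rightarrow> 'a \<Rightarrow> real" where
  "fS f S x = (\<Sum>i\<in>S. f i x) / real (card S)"

definition gS :: "(nat \<Rightarrow> 'a \<Rightarrow> 'a::real_vector) \<Rightarrow> nat set \<Rightarrow> 'a \<Rightarrow> 'a" where
  "gS g S x = (1 / real (card S)) *\<^sub>R (\<Sum>i\<in>S. g i x)"

definition fS_star :: "(nat \<Rightarrow> 'a \<Rightarrow> real) \<Rightarrow> nat set \<Rightarrow> real" where
  "fS_star f S = (INF x. fS f S x)"

end

theory Submission
  imports Defs
begin


lemma descent:
  fixes h :: "'a::euclidean_space \<Rightarrow> real" and G :: "'a \<Rightarrow> 'a"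
  assumes hd: "\<And>y. (h has_derivative (\<lambda>v. G y \<bullet> v)) (at y)"
    and lip: "\<And>y z. norm (G y - G z) \<le> K * norm (y - z)"
    and K: "K > 0"
  shows "h (y - (1/K) *\<^sub>R G y) \<le> h y - (norm (G y))\<^sup>2 / (2*K)"
proof -
  define g where "g = G y"
  define \<phi> where "\<phi> s = h (y - s *\<^sub>R g) + s * (norm g)\<^sup>2 - K * s\<^sup>2 / 2 * (norm g)\<^sup>2" for s :: real
  have der: "(\<phi> has_real_derivative (- (G (y - s *\<^sub>R g) \<bullet> g) + (norm g)\<^sup>2 - K * s * (norm g)\<^sup>2)) (at s)" for s
  proof -
    have l: "((\<lambda>s. y - s *\<^sub>R g) has_derivative (\<lambda>d. - (d *\<^sub>R g))) (at s)"
      by (auto intro!: derivative_eq_intros)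
    have c: "((\<lambda>s. h (y - s *\<^sub>R g)) has_derivative (\<lambda>d. G (y - s *\<^sub>R g) \<bullet> (- (d *\<^sub>R g)))) (at s)"
      using diff_chain_at[OF l hd] by (simp add: o_def)
    have c2: "((\<lambda>s. h (y - s *\<^sub>R g)) has_real_derivative (- (G (y - s *\<^sub>R g) \<bullet> g))) (at s)"
    proof -
      have "(\<lambda>d. G (y - s *\<^sub>R g) \<bullet> (- (d *\<^sub>R g))) = (*) (- (G (y - s *\<^sub>R g) \<bullet> g))"
        by (rule ext) (simp add: mult.commute)
      thus ?thesis using c by (simp add: has_field_derivative_def)
    qed
    show ?thesis unfolding \<phi>_def[abs_def]
      by (rule derivative_eq_intros c2 | simp)+ (simp add: power2_eq_square algebra_simps)?
  qed
  have nonpos: "- (G (y - s *\<^sub>R g) \<bullet> g) + (norm g)\<^sup>2 - K * s * (norm g)\<^sup>2 \<le> 0" if "s \<ge> 0" for s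
  proof -
    have "(norm g)\<^sup>2 = g \<bullet> g" by (simp add: power2_norm_eq_inner)
    hence "- (G (y - s *\<^sub>R g) \<bullet> g) + (norm g)\<^sup>2 = (g - G (y - s *\<^sub>R g)) \<bullet> g"
      by (simp add: inner_diff_left)
    also have "\<dots> \<le> norm (g - G (y - s *\<^sub>R g)) * norm g" by (rule norm_cauchy_schwarz)
    also have "\<dots> \<le> K * norm (y - (y - s *\<^sub>R g)) * norm g"
      using lip[of y "y - s *\<^sub>R g"] unfolding g_def by (simp add: mult_right_mono)
    also have "\<dots> = K * s * (norm g)\<^sup>2" using that by (simp add: power2_eq_square)
    finally show ?thesis by simp
  qed
  have "\<phi> (1/K) \<le> \<phi> 0"
    by (rule DERIV_nonpos_imp_nonincreasing[of 0 "1/K"]) (use K der nonpos in \<open>auto intro!: exI\<close>)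
  hence "h (y - (1/K) *\<^sub>R g) + (1/K) * (norm g)\<^sup>2 - K * (1/K)\<^sup>2 / 2 * (norm g)\<^sup>2 \<le> h y"
    by (simp add: \<phi>_def)
  moreover have "K * (1/K)\<^sup>2 / 2 = 1 / (2*K)" using K by (simp add: power2_eq_square)
  ultimately have "h (y - (1/K) *\<^sub>R g) + (1/K) * (norm g)\<^sup>2 - (norm g)\<^sup>2 / (2*K) \<le> h y" by simp
  moreover have "(1/K) * (norm g)\<^sup>2 - (norm g)\<^sup>2 / (2*K) = (norm g)\<^sup>2 / (2*K)" using K by (simp add: field_simps)
  ultimately show ?thesis unfolding g_def by linarith
qed

lemma fS_deriv:
  fixes f :: "nat \<Rightarrow> 'a::euclidean_space \<Rightarrow> real"
  assumes "\<And>i. i \<in> T \<Longrightarrow> (f i has_derivative (\<lambda>h. grad i y \<bullet> h)) (at y)"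
  shows "(fS f T has_derivative (\<lambda>v. gS grad T y \<bullet> v)) (at y)"
proof -
  have sd: "((\<lambda>x. (\<Sum>i\<in>T. f i x)) has_derivative (\<lambda>v. \<Sum>i\<in>T. grad i y \<bullet> v)) (at y)"
    using assms by (intro has_derivative_sum) auto
  have "((\<lambda>x. (\<Sum>i\<in>T. f i x) / real (card T)) has_derivative (\<lambda>v. (\<Sum>i\<in>T. grad i y \<bullet> v) / real (card T))) (at y)"
    using has_derivative_mult_left[OF sd, of "inverse (real (card T))"] by (simp add: divide_inverse)
  moreover have "(\<lambda>v. (\<Sum>i\<in>T. grad i y \<bullet> v) / real (card T)) = (\<lambda>v. gS grad T y \<bullet> v)"
    by (rule ext) (simp add: gS_def inner_sum_left)
  ultimately show ?thesis unfolding fS_def[abs_def] by simp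
qed

lemma gS_lip:
  fixes grad :: "nat \<Rightarrow> 'a::euclidean_space \<Rightarrow> 'a"
  assumes "finite T" "T \<noteq> {}" "\<And>i. i \<in> T \<Longrightarrow> norm (grad i y - grad i z) \<le> K * norm (y - z)"
  shows "norm (gS grad T y - gS grad T z) \<le> K * norm (y - z)"
proof -
  have "gS grad T y - gS grad T z = (1 / real (card T)) *\<^sub>R (\<Sum>i\<in>T. grad i y - grad i z)"
    by (simp add: gS_def sum_subtractf scaleR_diff_right)
  hence "norm (gS grad T y - gS grad T z) = (1 / real (card T)) * norm (\<Sum>i\<in>T. grad i y - grad i z)"
    by simp
  also have "\<dots> \<le> (1 / real (card T)) * (\<Sum>i\<in>T. K * norm (y - z))"
    by (intro mult_left_mono order.trans[OF norm_sum sum_mono]) (use assms in auto)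
  also have "\<dots> = K * norm (y - z)" using assms by (simp add: card_gt_0_iff)
  finally show ?thesis .
qed

lemma fS_bdd:
  fixes f :: "nat \<Rightarrow> 'a \<Rightarrow> real"
  assumes "finite T" "\<And>i. i \<in> T \<Longrightarrow> bdd_below (range (f i))"
  shows "bdd_below (range (fS f T))"
proof -
  have "\<forall>i\<in>T. \<exists>b. \<forall>x. b \<le> f i x" using assms(2) by (auto simp: bdd_below_def)
  then obtain b where b: "\<And>i x. i \<in> T \<Longrightarrow> b i \<le> f i x" by metis
  have "(\<Sum>i\<in>T. b i) / real (card T) \<le> fS f T x" for x
    unfolding fS_def by (intro divide_right_mono sum_mono b) auto
  thus ?thesis by (auto simp: bdd_below_def)
qed

lemma ratio_lb:
  fixes f :: "nat \<Rightarrow> 'a::euclidean_space \<Rightarrow> real"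
  assumes fin: "finite T" and ne: "T \<noteq> {}"
    and d: "\<And>i y. i \<in> T \<Longrightarrow> (f i has_derivative (\<lambda>h. grad i y \<bullet> h)) (at y)"
    and lip: "\<And>i y z. i \<in> T \<Longrightarrow> norm (grad i y - grad i z) \<le> K * norm (y - z)"
    and K: "K > 0"
    and bdd: "\<And>i. i \<in> T \<Longrightarrow> bdd_below (range (f i))"
    and ell: "e \<le> fS_star f T"
    and nz: "gS grad T y \<noteq> 0"
  shows "1 / (2*K) \<le> (fS f T y - e) / (norm (gS grad T y))\<^sup>2"
proof -
  have desc: "fS f T (y - (1/K) *\<^sub>R gS grad T y) \<le> fS f T y - (norm (gS grad T y))\<^sup>2 / (2*K)"
    by (rule descent[OF fS_deriv gS_lip K]) (use d lip fin ne in auto)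
  have "fS_star f T \<le> fS f T (y - (1/K) *\<^sub>R gS grad T y)"
    unfolding fS_star_def by (rule cINF_lower[OF fS_bdd[OF fin bdd]]) auto
  hence "(norm (gS grad T y))\<^sup>2 / (2*K) \<le> fS f T y - e" using desc ell by linarith
  moreover have "(norm (gS grad T y))\<^sup>2 > 0" using nz by simp
  ultimately show ?thesis using K by (simp add: field_simps)
qed



theorem lemma1:
  fixes n :: nat
    and f :: "nat \<Rightarrow> 'a::euclidean_space \<Rightarrow> real"
    and grad :: "nat \<Rightarrow> 'a \<Rightarrow> 'a"
    and L :: "nat \<Rightarrow> real"
    and c :: "nat \<Rightarrow> real"
    and S :: "nat \<Rightarrow> nat set"
    and x :: "nat \<Rightarrow> 'a"
    and \<gamma> :: "nat \<Rightarrow> real"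
    and \<gamma>b :: real
    and ell :: "nat set \<Rightarrow> real"
  assumes n_pos: "n \<ge> 1"
    and grad: "\<And>i y. i < n \<Longrightarrow> (f i has_derivative (\<lambda>h. grad i y \<bullet> h)) (at y)"
    and smooth: "\<And>i y z. i < n \<Longrightarrow> norm (grad i y - grad i z) \<le> L i * norm (y - z)"
    and lower_bdd: "\<And>i. i < n \<Longrightarrow> bdd_below (range (f i))"
    and c_pos: "\<And>k. c k > 0"
    and c_mono: "mono c"
    and S_sub: "\<And>k. S k \<subseteq> {..<n}"
    and S_ne: "\<And>k. S k \<noteq> {}"
    and ell_le: "\<And>T. T \<subseteq> {..<n} \<Longrightarrow> T \<noteq> {} \<Longrightarrow> ell T \<le> fS_star f T"
    and grad_nz: "\<And>k. gS grad (S k) (x k) \<noteq> 0"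
    and sgd: "\<And>k. x (Suc k) = x k - \<gamma> k *\<^sub>R gS grad (S k) (x k)"
    and \<gamma>b_pos: "\<gamma>b > 0"
    and \<gamma>0: "\<gamma> 0 = (1 / c 0) * min ((fS f (S 0) (x 0) - ell (S 0)) / (norm (gS grad (S 0) (x 0)))\<^sup>2) (c 0 * \<gamma>b)"
    and \<gamma>Suc: "\<And>k. \<gamma> (Suc k) = (1 / c (Suc k)) *
        min ((fS f (S (Suc k)) (x (Suc k)) - ell (S (Suc k))) / (norm (gS grad (S (Suc k)) (x (Suc k))))\<^sup>2)
            (c k * \<gamma> k)"
  shows "min (1 / (2 * c k * Max (L ` {..<n}))) (c 0 * \<gamma>b / c k) \<le> \<gamma> k
       \<and> \<gamma> k \<le> c 0 * \<gamma>b / c k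
       \<and> \<gamma> k \<le> (if k = 0 then \<gamma>b else \<gamma> (k - 1))"
  proof -
  define Lm where "Lm = Max (L ` {..<n})"
  define K where "K = (if Lm > 0 then Lm else 1)"
  have Kpos: "K > 0" unfolding K_def by auto
  have Li: "L i \<le> Lm" if "i < n" for i unfolding Lm_def using that by (intro Max_ge) auto
  have lipK: "norm (grad i y - grad i z) \<le> K * norm (y - z)" if "i < n" for i y z
  proof -
    have "L i * norm (y - z) \<le> K * norm (y - z)"
      using Li[OF that] unfolding K_def by (intro mult_right_mono) auto
    thus ?thesis using smooth[OF that, of y z] by linarith
  qed
  define r where "r k = (fS f (S k) (x k) - ell (S k)) / (norm (gS grad (S k) (x k)))\<^sup>2" for k
  have fin: "finite (S k)" for k using S_sub finite_subset by blast
  have rK: "1 / (2*K) \<le> r k" for k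
    unfolding r_def
  proof (rule ratio_lb[OF fin S_ne])
    have Sn: "i < n" if "i \<in> S k" for i using S_sub[of k] that by auto
    show "\<And>i y. i \<in> S k \<Longrightarrow> (f i has_derivative (\<lambda>h. grad i y \<bullet> h)) (at y)" using grad Sn by blast
    show "\<And>i y z. i \<in> S k \<Longrightarrow> norm (grad i y - grad i z) \<le> K * norm (y - z)" using lipK Sn by blast
    show "\<And>i. i \<in> S k \<Longrightarrow> bdd_below (range (f i))" using lower_bdd Sn by metis
  qed (use Kpos ell_le S_sub S_ne grad_nz in auto)
  have r0: "0 < r k" for k using rK[of k] Kpos by (smt (verit) divide_pos_pos)
  have rL: "1 / (2*Lm) \<le> r k" for k
  proof (cases "Lm > 0")
    case True thus ?thesis using rK[of k] by (simp add: K_def)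
  next
    case False
    hence "1 / (2*Lm) \<le> 0" by (simp add: divide_nonpos_nonneg)
    thus ?thesis using r0[of k] by linarith
  qed
  define m where "m = min (1 / (2*Lm)) (c 0 * \<gamma>b)"
  have cg0: "c 0 * \<gamma> 0 = min (r 0) (c 0 * \<gamma>b)" using \<gamma>0 c_pos[of 0] by (simp add: r_def)
  have cgS: "c (Suc k) * \<gamma> (Suc k) = min (r (Suc k)) (c k * \<gamma> k)" for k
    using \<gamma>Suc[of k] c_pos[of "Suc k"] by (simp add: r_def)
  have inv: "m \<le> c k * \<gamma> k \<and> c k * \<gamma> k \<le> c 0 * \<gamma>b \<and> 0 \<le> \<gamma> k" for k
  proof (induction k)
    case 0
    have "0 < c 0 * \<gamma>b" using c_pos \<gamma>b_pos by simp
    hence "0 \<le> c 0 * \<gamma> 0" using cg0 r0[of 0] by linarith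
    hence "0 \<le> \<gamma> 0" using c_pos[of 0] by (simp add: zero_le_mult_iff)
    then show ?case using cg0 rL[of 0] unfolding m_def by linarith
  next
    case (Suc k)
    have "0 \<le> c k * \<gamma> k" using Suc c_pos[of k] by simp
    hence "0 \<le> c (Suc k) * \<gamma> (Suc k)" using cgS[of k] r0[of "Suc k"] by linarith
    hence "0 \<le> \<gamma> (Suc k)" using c_pos[of "Suc k"] by (simp add: zero_le_mult_iff)
    then show ?case using cgS[of k] rL[of "Suc k"] Suc unfolding m_def by linarith
  qed
  have ck: "c k > 0" by (rule c_pos)
  have A: "min (1 / (2 * c k * Lm)) (c 0 * \<gamma>b / c k) = m / c k"
    unfolding m_def using ck by (simp add: min_divide_distrib_right mult.commute mult.left_commute)
  have "m / c k \<le> \<gamma> k" using inv[of k] ck by (simp add: pos_divide_le_eq mult.commute)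
  moreover have "\<gamma> k \<le> c 0 * \<gamma>b / c k" using inv[of k] ck by (simp add: pos_le_divide_eq mult.commute)
  moreover have "\<gamma> k \<le> (if k = 0 then \<gamma>b else \<gamma> (k - 1))"
  proof (cases k)
    case 0 thus ?thesis using inv[of 0] c_pos[of 0] by (simp add: mult_le_cancel_left_pos)
  next
    case (Suc j)
    have "c j \<le> c (Suc j)" using c_mono by (simp add: mono_def)
    hence "c j * \<gamma> j \<le> c (Suc j) * \<gamma> j" using inv[of j] by (simp add: mult_right_mono)
    hence "c (Suc j) * \<gamma> (Suc j) \<le> c (Suc j) * \<gamma> j" using cgS[of j] by linarith
    thus ?thesis using Suc c_pos[of "Suc j"] by (simp add: mult_le_cancel_left_pos)
  qed
  ultimately show ?thesis using A unfolding Lm_def by simp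
qed

end
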